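(* Let $\varphi=\frac{1+\sqrt5}{2}$ and $\bar\varphi=\frac{1-\sqrt5}{2}$. Consider the two systems of functional equations for a map $f:\mathsf P^1(\mathbb Z)\to\mathsf P^1(\mathbb C)$: (A) $f(1-1/x)=1-1/f(x)$ and $f(-1/x)=-f(x)$ for all $x\in\mathsf P^1(\mathbb Z)$; (B) $f(1-1/x)=1-1/f(x)$ and $f(-1/(1+x))=-1-1/f(x)$ for all $x\in\mathsf P^1(\mathbb Z)$. Each of (A) and (B) has exactly two solutions, namely one with $f(1)=\varphi^2=\frac{3+\sqrt5}{2}$ and one with $f(1)=\bar\varphi^2=\frac{3-\sqrt5}{2}$.
   Context: $\mathsf P^1(\mathbb Z)=\mathbb Q\cup\{\infty\}$, $\mathsf P^1(\mathbb C)=\mathbb C\cup\{\infty\}$, with Möbius transformations extended to $\infty$ in the usual way. Interpretation: with Dyer's outer automorphism $\alpha$ of $\mathsf{PGL}_2(\mathbb Z)$ (defined by $\alpha(U)=U$, $\alpha(K)=K$, $\alpha(V)=UV$ where $U(x)=1/x$, $K(x)=1-x$, $V(x)=-x$), system (A) says $f(gx)=\alpha(g)f(x)$ for all $g\in\mathsf{PSL}_2(\mathbb Z)$, and system (B) says the same for all $g$ in $\Gamma=\langle L,SLS\rangle$, where $L(x)=1-1/x$, $S(x)=-1/x$. *)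

theory Defs
  imports Complex_Main
begin

text \<open>Projective line P^1(K) = K \<union> {\<infinity>} over a field K, modelled as K option,
  with None = \<infinity>. P^1(Z) = Q \<union> {\<infinity>} is rat option, P^1(C) is complex option.\<close>

type_synonym 'a proj = "'a option"

definition moebL :: "'a::field option \<Rightarrow> 'a option" where
  "moebL x = (case x of None \<Rightarrow> Some 1
                | Some q \<Rightarrow> (if q = 0 then None else Some (1 - 1 / q)))"

definition moebS :: "'a::field option \<Rightarrow> 'a option" where
  "moebS x = (case x of None \<Rightarrow> Some 0
                | Some q \<Rightarrow> (if q = 0 then None else Some (- 1 / q)))"

definition moebNeg :: "'a::field option \<Rightarrow> 'a option" where
  "moebNeg x = (case x of None \<Rightarrow> None | Some q \<Rightarrow> Some (- q))"

definition moebT :: "'a::field option \<Rightarrow> 'a option" where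
  "moebT x = (case x of None \<Rightarrow> Some 0
                | Some q \<Rightarrow> (if 1 + q = 0 then None else Some (- 1 / (1 + q))))"

definition moebM :: "'a::field option \<Rightarrow> 'a option" where
  "moebM x = (case x of None \<Rightarrow> Some (- 1)
                | Some q \<Rightarrow> (if q = 0 then None else Some (- 1 - 1 / q)))"

definition sysA :: "(rat option \<Rightarrow> complex option) \<Rightarrow> bool" where
  "sysA f \<longleftrightarrow> (\<forall>x. f (moebL x) = moebL (f x) \<and> f (moebS x) = moebNeg (f x))"

definition sysB :: "(rat option \<Rightarrow> complex option) \<Rightarrow> bool" where
  "sysB f \<longleftrightarrow> (\<forall>x. f (moebL x) = moebL (f x) \<and> f (moebT x) = moebM (f x))"

definition phi :: complex where "phi = complex_of_real ((1 + sqrt 5) / 2)"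
definition phibar :: complex where "phibar = complex_of_real ((1 - sqrt 5) / 2)"

end

theory Submission
  imports Defs
begin

lemma golden_not_rat:
  fixes w :: complex assumes "w^2 = w + 1" shows "w \<notin> \<rat>"
proof
  assume "w \<in> \<rat>"
  then obtain r where r: "w = of_rat r" by (auto simp: Rats_def)
  then have "of_rat (r^2) = (of_rat (r+1) :: complex)" using assms by (simp add: of_rat_power of_rat_add)
  then have rr: "r^2 = r + 1" using of_rat_eq_iff by blast
  obtain a b where ab: "quotient_of r = (a,b)" by (cases "quotient_of r")
  then have b0: "b > 0" and cop: "coprime a b" and rab: "r = of_int a / of_int b"
    using quotient_of_denom_pos quotient_of_coprime quotient_of_div by blast+
  have "(of_int a / of_int b)^2 = (of_int a / of_int b :: rat) + 1" using rr rab by simp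
  then have "of_int (a^2) = (of_int (a*b + b^2) :: rat)" using b0 by (simp add: field_simps power2_eq_square)
  then have e: "a^2 = a*b + b^2" using of_int_eq_iff by blast
  then have "b dvd a^2" by (metis dvd_add_right_iff dvd_mult power2_eq_square dvd_refl dvd_triv_right)
  moreover have "coprime b (a^2)" using cop by (simp add: coprime_commute)
  ultimately have "is_unit b" using coprime_common_divisor[OF _ dvd_refl] by blast
  then have "b = 1" using b0 by auto
  with e have "a * (a - 1) = 1" by (simp add: algebra_simps power2_eq_square)
  then have "a dvd 1" by (metis dvd_triv_left)
  then have "\<bar>a\<bar> = 1" by simp
  then have "a = 1 \<or> a = -1" by arith
  then show False using \<open>a * (a - 1) = 1\<close> by (elim disjE) simp_all
qed


definition Am :: "complex \<Rightarrow> complex" where "Am z = 1 + 1 / z"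
definition Ai :: "complex \<Rightarrow> complex" where "Ai z = 1 / (z - 1)"

lemma Rats_inv_iff: "(1 / (z::complex) \<in> \<rat>) = (z \<in> \<rat>)"
  by (metis Rats_inverse inverse_eq_divide inverse_inverse_eq)

lemma irr_Am: "z \<notin> \<rat> \<Longrightarrow> Am z \<notin> \<rat>"
  unfolding Am_def by (metis Rats_1 Rats_diff Rats_inv_iff add_diff_cancel_left')
lemma irr_Ai: "z \<notin> \<rat> \<Longrightarrow> Ai z \<notin> \<rat>"
  unfolding Ai_def by (metis Rats_1 Rats_add Rats_inv_iff diff_add_cancel)
lemma irr_neg: "z \<notin> \<rat> \<Longrightarrow> - z \<notin> \<rat>"
  by (metis Rats_minus_iff)
lemma irr_nz: "z \<notin> \<rat> \<Longrightarrow> z \<noteq> 0" by auto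
lemma irr_n1: "z \<notin> \<rat> \<Longrightarrow> z \<noteq> 1" by auto
lemma irr_nm1: "z \<notin> \<rat> \<Longrightarrow> z \<noteq> -1" using Rats_minus_iff Rats_1 by fastforce

lemma Am_Ai: "z \<notin> \<rat> \<Longrightarrow> Am (Ai z) = z"
  using irr_n1[of z] unfolding Am_def Ai_def by simp
lemma Ai_Am: "z \<notin> \<rat> \<Longrightarrow> Ai (Am z) = z"
  using irr_nz[of z] unfolding Am_def Ai_def by simp

definition Apow :: "int \<Rightarrow> complex \<Rightarrow> complex" where
  "Apow n z = (if n \<ge> 0 then (Am ^^ nat n) z else (Ai ^^ nat (-n)) z)"

lemma irr_Am_pow: "z \<notin> \<rat> \<Longrightarrow> (Am ^^ n) z \<notin> \<rat>"
  by (induction n) (simp_all add: irr_Am)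
lemma irr_Ai_pow: "z \<notin> \<rat> \<Longrightarrow> (Ai ^^ n) z \<notin> \<rat>"
  by (induction n) (simp_all add: irr_Ai)
lemma irr_Apow: "z \<notin> \<rat> \<Longrightarrow> Apow n z \<notin> \<rat>"
  unfolding Apow_def using irr_Am_pow irr_Ai_pow by auto

lemma Apow_0: "Apow 0 z = z" by (simp add: Apow_def)

lemma Apow_succ: assumes "z \<notin> \<rat>" shows "Apow (n + 1) z = Am (Apow n z)"
proof (cases "n \<ge> 0")
  case True
  then have "nat (n+1) = Suc (nat n)" by simp
  then show ?thesis using True by (simp add: Apow_def)
next
  case False
  then have e: "nat (-n) = Suc (nat (-(n+1)))" by simp
  have "Am (Apow n z) = Am (Ai ((Ai ^^ nat (-(n+1))) z))" using False e by (simp add: Apow_def)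
  also have "\<dots> = (Ai ^^ nat (-(n+1))) z" using Am_Ai irr_Ai_pow assms by blast
  also have "\<dots> = Apow (n+1) z" using False by (simp add: Apow_def)
  finally show ?thesis by simp
qed

function G :: "complex \<Rightarrow> int \<Rightarrow> int \<Rightarrow> complex" where
  "G w p q = (if q \<le> 0 then 0 else
     Apow (p div q) (if p mod q = 0 then - w else - G w (- q) (p mod q)))"
  by auto
termination by (relation "measure (\<lambda>(w,p,q). nat q)") auto

declare G.simps[simp del]

lemma irr_G: "w \<notin> \<rat> \<Longrightarrow> q > 0 \<Longrightarrow> G w p q \<notin> \<rat>"
proof (induction w p q rule: G.induct)
  case (1 w p q)
  show ?case
  proof (cases "p mod q = 0")
    case True
    then show ?thesis using 1 by (subst G.simps) (simp add: irr_Apow irr_neg)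
  next
    case False
    then have "p mod q > 0" using 1(3) by (simp add: order_le_neq_trans)
    then have "G w (-q) (p mod q) \<notin> \<rat>" using 1 False by auto
    then show ?thesis using 1 False by (subst G.simps) (simp add: irr_Apow irr_neg)
  qed
qed

lemma G_scale: "k > 0 \<Longrightarrow> G w (k * p) (k * q) = G w p q"
proof (induction w p q rule: G.induct)
  case (1 w p q)
  show ?case
  proof (cases "q \<le> 0")
    case True
    have "k * q \<le> 0" using 1(2) True by (simp add: mult_nonneg_nonpos)
    then show ?thesis using True by (simp add: G.simps[of w p q] G.simps[of w "k*p"])
  next
    case False
    have d: "(k*p) div (k*q) = p div q" using 1(2) by simp
    have m: "(k*p) mod (k*q) = k * (p mod q)" by simp
    have rec: "p mod q \<noteq> 0 \<Longrightarrow> G w (k * (-q)) (k * (p mod q)) = G w (-q) (p mod q)"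
      using 1 False by blast
    have "\<not> k * q \<le> 0" using False 1(2) by (simp add: not_le)
    show ?thesis using False 1(2) d m rec \<open>\<not> k * q \<le> 0\<close>
      by (simp add: G.simps[of w p q] G.simps[of w "k*p" "k*q"])
  qed
qed


definition F :: "complex \<Rightarrow> rat \<Rightarrow> complex" where
  "F w x = G w (fst (quotient_of x)) (snd (quotient_of x))"

lemma rat_rep: fixes x :: rat obtains p q where "x = of_int p / of_int q" "q > 0"
proof -
  obtain a b where ab: "quotient_of x = (a, b)" by (cases "quotient_of x")
  show ?thesis using that[of a b] quotient_of_div[OF ab] quotient_of_denom_pos[OF ab] by blast
qed

lemma F_eq: assumes "q > 0" shows "F w (of_int p / of_int q) = G w p q"
proof -
  obtain a b where ab: "quotient_of (of_int p / of_int q) = (a, b)" by (cases "quotient_of (of_int p / of_int q)")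
  then have b0: "b > 0" and e: "(of_int p / of_int q :: rat) = of_int a / of_int b"
    using quotient_of_denom_pos quotient_of_div by blast+
  then have "(of_int (p * b) :: rat) = of_int (a * q)" using assms by (simp add: field_simps)
  then have pb: "p * b = a * q" using of_int_eq_iff by blast
  have "G w p q = G w (b * p) (b * q)" using G_scale b0 by simp
  also have "\<dots> = G w (q * a) (q * b)" using pb by (simp add: mult.commute)
  also have "\<dots> = G w a b" using G_scale assms by simp
  finally show ?thesis using ab by (simp add: F_def)
qed

lemma F_irr: assumes "w \<notin> \<rat>" shows "F w x \<notin> \<rat>"
  unfolding F_def using irr_G[OF assms] quotient_of_denom_pos' by blast

lemma F_T: assumes w: "w \<notin> \<rat>" shows "F w (x + 1) = Am (F w x)"
proof -
  obtain p q where x: "x = of_int p / of_int q" "q > 0" by (rule rat_rep)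
  have x1: "x + 1 = of_int (p + q) / of_int q" using x by (simp add: field_simps)
  have d: "(p + q) div q = p div q + 1" using x(2) by simp
  have m: "(p + q) mod q = p mod q" by simp
  define z where "z = (if p mod q = 0 then - w else - G w (- q) (p mod q))"
  have z: "z \<notin> \<rat>"
  proof (cases "p mod q = 0")
    case True then show ?thesis using w by (simp add: z_def irr_neg)
  next
    case False
    then have "p mod q > 0" using x(2) by (simp add: order_le_neq_trans)
    then show ?thesis using False irr_G[OF w] by (simp add: z_def irr_neg)
  qed
  have "G w (p + q) q = Apow (p div q + 1) z" using x(2) d m by (simp add: G.simps[of w "p+q"] z_def)
  also have "\<dots> = Am (Apow (p div q) z)" using Apow_succ z by blast
  also have "\<dots> = Am (G w p q)" using x(2) by (simp add: G.simps[of w p] z_def)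
  finally have "G w (p + q) q = Am (G w p q)" .
  moreover have "F w (x+1) = G w (p+q) q" unfolding x1 by (rule F_eq[OF x(2)])
  moreover have "F w x = G w p q" unfolding x(1) by (rule F_eq[OF x(2)])
  ultimately show ?thesis by simp
qed

lemma F_Tm: assumes w: "w \<notin> \<rat>" shows "F w (x - 1) = Ai (F w x)"
  using F_T[OF w, of "x - 1"] Ai_Am F_irr[OF w] by simp

lemma F_0: "F w 0 = - w"
proof -
  have "G w 0 1 = - w" by (subst G.simps) (simp add: Apow_0)
  then show ?thesis by (simp add: F_def)
qed

lemma F_S01: assumes "0 < x" "x < 1" shows "F w (-1 / x) = - F w x"
proof -
  obtain p q where x: "x = of_int p / of_int q" "q > 0" by (rule rat_rep)
  have p: "0 < p" "p < q" using assms x by (simp_all add: divide_less_eq zero_less_divide_iff)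
  have e: "-1 / x = of_int (-q) / of_int p" using x p by simp
  have "F w (-1 / x) = G w (-q) p" unfolding e by (rule F_eq) (use p in simp)
  moreover have "F w x = G w p q" using F_eq x by simp
  moreover have "G w p q = - G w (-q) p" using p by (simp add: G.simps[of w p q] Apow_0)
  ultimately show ?thesis by simp
qed

lemma Ai_chain: assumes "z \<notin> \<rat>" shows "Ai (- Ai (- Ai z)) = - z"
proof -
  have "z \<noteq> 0" "z \<noteq> 1" using assms irr_nz irr_n1 by auto
  then have "1 - z \<noteq> 0" "z - 1 \<noteq> 0" by auto
  then show ?thesis unfolding Ai_def using \<open>z \<noteq> 0\<close> by (simp add: field_simps)
qed

lemma F_S_pos: assumes w2: "w^2 = w + 1" and "x > 0" shows "F w (-1 / x) = - F w x"
proof -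
  have w: "w \<notin> \<rat>" using golden_not_rat w2 by blast
  have "\<forall>x. x > 0 \<and> nat \<lfloor>x\<rfloor> = n \<longrightarrow> F w (-1 / x) = - F w x" for n
  proof (induction n)
    case 0
    show ?case
    proof (intro allI impI)
      fix x :: rat assume h: "x > 0 \<and> nat \<lfloor>x\<rfloor> = 0"
      then have "x < 1" by (metis floor_less_one le_less_linear nat_0_iff of_int_0 floor_le_zero not_le)
      then show "F w (-1 / x) = - F w x" using F_S01 h by blast
    qed
  next
    case (Suc n)
    show ?case
    proof (intro allI impI)
      fix x :: rat assume h: "x > 0 \<and> nat \<lfloor>x\<rfloor> = Suc n"
      then have x1: "x \<ge> 1" by linarith
      show "F w (-1 / x) = - F w x"
      proof (cases "x = 1")
        case True
        have "w \<noteq> 0" using w irr_nz by auto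
        have "w \<noteq> -1" using irr_nm1[OF w] .
        then have "w + 1 \<noteq> 0" by (simp add: eq_neg_iff_add_eq_0)
        have a: "F w (-1) = Ai (- w)" using F_Tm[OF w, of 0] F_0 by simp
        have b: "F w 1 = Am (- w)" using F_T[OF w, of 0] F_0 by simp
        have "- w - 1 \<noteq> 0" using \<open>w + 1 \<noteq> 0\<close> by (metis add.commute diff_minus_eq_add minus_diff_eq neg_equal_0_iff_equal uminus_add_conv_diff)
        have "Ai (- w) = - Am (- w)" unfolding Ai_def Am_def using \<open>w \<noteq> 0\<close> \<open>- w - 1 \<noteq> 0\<close> w2
          by (simp add: field_simps power2_eq_square)
        then show ?thesis using True a b by simp
      next
        case False
        define y where "y = x - 1"
        have y: "y > 0" "nat \<lfloor>y\<rfloor> = n" using h x1 False by (auto simp: y_def)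
        have IH: "F w (-1 / y) = - F w y" using Suc y by blast
        define u where "u = 1 - 1 / x"
        have x0: "x \<noteq> 0" using x1 by auto
        have uy: "u = y / x" using x0 by (simp add: u_def y_def diff_divide_distrib)
        have yx: "y < x" by (simp add: y_def)
        have u: "0 < u" "u < 1" using y(1) yx x1 unfolding uy by (simp_all add: divide_less_eq)
        have e1: "-1 / x = u - 1" by (simp add: u_def)
        have e2: "-1 / u = (-1 / y) - 1"
        proof -
          have "y \<noteq> 0" using y by simp
          have "-1 / u = - x / y" unfolding uy by simp
          also have "\<dots> = (-1 / y) - 1" using \<open>y \<noteq> 0\<close> by (simp add: y_def field_simps)
          finally show ?thesis .
        qed
        have "F w (-1 / x) = Ai (F w u)" using e1 F_Tm[OF w] by simp
        also have "F w u = - F w (-1 / u)" using F_S01[OF u] by simp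
        also have "F w (-1 / u) = Ai (F w (-1 / y))" using e2 F_Tm[OF w] by simp
        finally have a: "F w (-1 / x) = Ai (- Ai (F w (-1 / y)))" .
        have "F w y = Ai (F w x)" using F_Tm[OF w] by (simp add: y_def)
        then have "F w (-1 / x) = Ai (- Ai (- Ai (F w x)))" using IH a by simp
        then show ?thesis using Ai_chain F_irr[OF w] by simp
      qed
    qed
  qed
  then show ?thesis using assms by blast
qed

lemma F_S: assumes w2: "w^2 = w + 1" and x0: "x \<noteq> 0" shows "F w (-1 / x) = - F w x"
proof -
  have pos: "\<And>y. y > 0 \<Longrightarrow> F w (-1 / y) = - F w y" using F_S_pos[OF w2] by blast
  show ?thesis
  proof (cases "x > 0")
    case True then show ?thesis using pos by blast
  next
    case False
    then have "x < 0" using x0 by simp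
    then have "-1 / x > 0" by (simp add: divide_neg_neg)
    then have "F w (-1 / (-1 / x)) = - F w (-1 / x)" using pos by blast
    then show ?thesis using x0 by simp
  qed
qed


definition fA :: "complex \<Rightarrow> rat option \<Rightarrow> complex option" where
  "fA w x = (case x of None \<Rightarrow> Some w | Some q \<Rightarrow> Some (F w q))"

lemma F_1: assumes w: "w \<notin> \<rat>" shows "F w 1 = Am (- w)"
  using F_T[OF w, of 0] F_0 by simp

lemma sysA_fA: assumes w2: "w^2 = w + 1" shows "sysA (fA w)"
  unfolding sysA_def
proof (intro allI conjI)
  have w: "w \<notin> \<rat>" using golden_not_rat w2 by blast
  have w0: "w \<noteq> 0" using w irr_nz by auto
  have ww: "1 + 1 / w = w" using w0 w2 by (simp add: field_simps power2_eq_square)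
  fix x
  show "fA w (moebL x) = moebL (fA w x)"
  proof (cases x)
    case None
    then show ?thesis using w0 F_1[OF w] by (simp add: fA_def moebL_def Am_def)
  next
    case (Some q)
    show ?thesis
    proof (cases "q = 0")
      case True
      then show ?thesis using Some w0 F_0 ww by (simp add: fA_def moebL_def)
    next
      case False
      have e: "1 - 1 / q = (-1 / q) + 1" by simp
      have "F w (1 - 1 / q) = F w ((-1 / q) + 1)" using e by (rule arg_cong)
      also have "\<dots> = Am (F w (-1 / q))" by (rule F_T[OF w])
      also have "\<dots> = Am (- F w q)" using F_S[OF w2 False] by simp
      finally have "F w (1 - 1 / q) = Am (- F w q)" .
      moreover have "F w q \<noteq> 0" using F_irr[OF w] irr_nz by blast
      ultimately show ?thesis using Some False by (simp add: fA_def moebL_def Am_def)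
    qed
  qed
  show "fA w (moebS x) = moebNeg (fA w x)"
  proof (cases x)
    case None
    then show ?thesis using F_0 by (simp add: fA_def moebS_def moebNeg_def)
  next
    case (Some q)
    show ?thesis
    proof (cases "q = 0")
      case True
      then show ?thesis using Some F_0 by (simp add: fA_def moebS_def moebNeg_def)
    next
      case False
      then show ?thesis using Some F_S[OF w2 False] by (simp add: fA_def moebS_def moebNeg_def)
    qed
  qed
qed

lemma fA_1: assumes w2: "w^2 = w + 1" shows "fA w (Some 1) = Some (1 - 1 / w)"
proof -
  have w: "w \<notin> \<rat>" using golden_not_rat w2 by blast
  show ?thesis using F_1[OF w] by (simp add: fA_def Am_def)
qed

lemma SLS: "moebS (moebL (moebS x)) = moebT (x :: 'a::field option)"
proof (cases x)
  case None then show ?thesis by (simp add: moebS_def moebL_def moebT_def)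
next
  case (Some q)
  show ?thesis
  proof (cases "q = 0")
    case True then show ?thesis using Some by (simp add: moebS_def moebL_def moebT_def)
  next
    case False
    show ?thesis
    proof (cases "1 + q = 0")
      case True
      then have "q = -1" by (simp add: eq_neg_iff_add_eq_0 add.commute)
      then show ?thesis using Some by (simp add: moebS_def moebL_def moebT_def)
    next
      case False
      then show ?thesis using Some \<open>q \<noteq> 0\<close> by (simp add: moebS_def moebL_def moebT_def add.commute)
    qed
  qed
qed

lemma NLN: "moebNeg (moebL (moebNeg x)) = moebM (x :: 'a::field option)"
proof (cases x)
  case None then show ?thesis by (simp add: moebNeg_def moebL_def moebM_def)
next
  case (Some q)
  then show ?thesis by (cases "q = 0") (simp_all add: moebNeg_def moebL_def moebM_def)
qed

lemma sysA_sysB: assumes "sysA f" shows "sysB f"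
  unfolding sysB_def
proof (intro allI conjI)
  fix x
  show "f (moebL x) = moebL (f x)" using assms by (simp add: sysA_def)
  have "f (moebT x) = f (moebS (moebL (moebS x)))" by (simp add: SLS)
  also have "\<dots> = moebNeg (moebL (moebNeg (f x)))" using assms by (simp add: sysA_def)
  also have "\<dots> = moebM (f x)" by (rule NLN)
  finally show "f (moebT x) = moebM (f x)" .
qed

lemma moebL_inj: "moebL a = moebL (b :: 'a::field option) \<Longrightarrow> a = b"
  by (cases a; cases b) (auto simp: moebL_def split: if_splits)


inductive_set RA :: "rat option set" where
  RA0: "None \<in> RA" | RAL: "x \<in> RA \<Longrightarrow> moebL x \<in> RA" | RAS: "x \<in> RA \<Longrightarrow> moebS x \<in> RA"

lemma RA_T: assumes "Some q \<in> RA" shows "Some (q + 1) \<in> RA"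
proof -
  have "moebL (moebS (Some q)) = Some (q + 1)"
    by (cases "q = 0") (simp_all add: moebL_def moebS_def)
  then show ?thesis using RAL[OF RAS[OF assms]] by simp
qed

lemma RA_Tm: assumes "Some q \<in> RA" shows "Some (q - 1) \<in> RA"
proof -
  have "moebS (moebL (moebL (Some q))) = Some (q - 1)"
  proof (cases "q = 0 \<or> q = 1")
    case True then show ?thesis by (auto simp: moebL_def moebS_def)
  next
    case False
    then have q0: "q \<noteq> 0" "q - 1 \<noteq> 0" by auto
    then have a: "1 - 1 / q \<noteq> 0" by (simp add: field_simps)
    have b: "1 - 1 / (1 - 1 / q) = - 1 / (q - 1)" using q0 by (simp add: field_simps)
    show ?thesis using q0 a b by (simp add: moebL_def moebS_def)
  qed
  then show ?thesis using RAS[OF RAL[OF RAL[OF assms]]] by simp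
qed

lemma RA_shift: assumes "Some q \<in> RA" shows "Some (q + of_int n) \<in> RA"
proof -
  have "Some (q + of_nat m) \<in> RA \<and> Some (q - of_nat m) \<in> RA" for m
  proof (induction m)
    case 0 then show ?case using assms by simp
  next
    case (Suc m)
    then have "Some (q + of_nat m + 1) \<in> RA" "Some (q - of_nat m - 1) \<in> RA" using RA_T RA_Tm by blast+
    then show ?case by (simp add: ac_simps diff_diff_eq)
  qed
  note H = this
  show ?thesis
  proof (cases "n \<ge> 0")
    case True
    then obtain m where "n = int m" using nonneg_int_cases by blast
    then show ?thesis using H[of m] by simp
  next
    case False
    define m where "m = nat (- n)"
    have "n = - int m" using False by (simp add: m_def)
    then show ?thesis using H[of m] by simp
  qed
qed

lemma RA_frac: "q > 0 \<Longrightarrow> Some (of_int p / of_int q) \<in> RA"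
proof (induction "nat q" arbitrary: p q rule: less_induct)
  case less
  define r where "r = p mod q"
  define n where "n = p div q"
  have pq: "p = q * n + r" by (simp add: r_def n_def)
  have r: "0 \<le> r" "r < q" using less.prems by (simp_all add: r_def)
  have e: "of_int p / of_int q = (of_int r / of_int q :: rat) + of_int n"
    using less.prems by (simp add: pq field_simps)
  have "Some (of_int r / of_int q :: rat) \<in> RA"
  proof (cases "r = 0")
    case True
    then show ?thesis using RAS[OF RA0] by (simp add: moebS_def)
  next
    case False
    then have r0: "r > 0" using r by simp
    have "Some (of_int (-q) / of_int r :: rat) \<in> RA" using less.hyps[of r "-q"] r0 r by simp
    from RAS[OF this] show ?thesis using r0 less.prems by (simp add: moebS_def)
  qed
  then show ?case unfolding e by (rule RA_shift)
qed

lemma RA_UNIV: "x \<in> RA"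
proof (cases x)
  case None then show ?thesis by (simp add: RA0)
next
  case (Some q)
  obtain p d where "q = of_int p / of_int d" "d > 0" by (rule rat_rep)
  then show ?thesis using Some RA_frac by simp
qed

lemma uniqA: assumes "sysA f" "sysA g" "f None = g None" shows "f = g"
proof
  fix x
  have "x \<in> RA" by (rule RA_UNIV)
  then show "f x = g x"
    by (induction x rule: RA.induct) (use assms in \<open>simp_all add: sysA_def\<close>)
qed

inductive_set RB :: "rat option set" where
  RB0: "None \<in> RB" | RBL: "x \<in> RB \<Longrightarrow> moebL x \<in> RB" | RBT: "x \<in> RB \<Longrightarrow> moebT x \<in> RB"

lemma RB_T2: assumes "Some q \<in> RB" shows "Some (q + 2) \<in> RB"
proof -
  have "moebL (moebT (Some q)) = Some (q + 2)"
  proof (cases "1 + q = 0")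
    case True then have "q = -1" by (simp add: eq_neg_iff_add_eq_0 add.commute)
    then show ?thesis by (simp add: moebL_def moebT_def)
  next
    case False then show ?thesis by (simp add: moebL_def moebT_def)
  qed
  then show ?thesis using RBL[OF RBT[OF assms]] by simp
qed

lemma RB_T2m: assumes "Some q \<in> RB" shows "Some (q - 2) \<in> RB"
proof -
  have "moebT (moebT (moebL (moebL (Some q)))) = Some (q - 2)"
  proof (cases "q = 0 \<or> q = 1 \<or> q = 2")
    case True then show ?thesis by (auto simp: moebL_def moebT_def)
  next
    case False
    then have q0: "q \<noteq> 0" "q - 1 \<noteq> 0" "q - 2 \<noteq> 0" by auto
    then have a: "1 - 1 / q \<noteq> 0" by (simp add: field_simps)
    have b: "1 - 1 / (1 - 1 / q) = 1 / (1 - q)" using q0 by (simp add: field_simps)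
    have c: "1 + 1 / (1 - q) \<noteq> 0" using q0 by (simp add: field_simps)
    have d: "- 1 / (1 + 1 / (1 - q)) = (q - 1) / (2 - q)" using q0 by (simp add: field_simps)
    have e: "1 + (q - 1) / (2 - q) \<noteq> 0" using q0 by (simp add: field_simps)
    have f: "- 1 / (1 + (q - 1) / (2 - q)) = q - 2" using q0 by (simp add: field_simps)
    show ?thesis using q0 a b c d e f by (simp add: moebL_def moebT_def)
  qed
  then show ?thesis using RBT[OF RBT[OF RBL[OF RBL[OF assms]]]] by simp
qed

lemma RB_shift: assumes "Some q \<in> RB" shows "Some (q + 2 * of_int n) \<in> RB"
proof -
  have "Some (q + 2 * of_nat m) \<in> RB \<and> Some (q - 2 * of_nat m) \<in> RB" for m
  proof (induction m)
    case 0 then show ?case using assms by simp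
  next
    case (Suc m)
    then have "Some (q + 2 * of_nat m + 2) \<in> RB" "Some (q - 2 * of_nat m - 2) \<in> RB" using RB_T2 RB_T2m by blast+
    then show ?case by (simp add: ac_simps diff_diff_eq)
  qed
  note H = this
  show ?thesis
  proof (cases "n \<ge> 0")
    case True
    then obtain m where "n = int m" using nonneg_int_cases by blast
    then show ?thesis using H[of m] by simp
  next
    case False
    define m where "m = nat (- n)"
    have "n = - int m" using False by (simp add: m_def)
    then show ?thesis using H[of m] by simp
  qed
qed

lemma RB_frac: "q > 0 \<Longrightarrow> Some (of_int p / of_int q) \<in> RB"
proof (induction "nat q" arbitrary: p q rule: less_induct)
  case less
  define m where "m = (p + q) mod (2 * q) - q"
  define n where "n = (p + q) div (2 * q)"
  have h: "n * (2 * q) + (m + q) = p + q" using div_mult_mod_eq[of "p + q" "2 * q"] by (simp add: m_def n_def)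
  then have pq: "p = 2 * q * n + m" by (simp add: algebra_simps)
  have m: "- q \<le> m" "m < q" using less.prems by (simp_all add: m_def)
  have e: "of_int p / of_int q = (of_int m / of_int q :: rat) + 2 * of_int n"
    using less.prems by (simp add: pq field_simps)
  have "Some (of_int m / of_int q :: rat) \<in> RB"
  proof (cases "m = 0 \<or> m = - q")
    case True
    then show ?thesis
    proof
      assume "m = 0" then show ?thesis using RBT[OF RB0] by (simp add: moebT_def)
    next
      assume "m = - q" then show ?thesis using RBT[OF RBT[OF RB0]] less.prems by (simp add: moebT_def)
    qed
  next
    case False
    then have mm: "m \<noteq> 0" "m \<noteq> q" "m \<noteq> -q" using m by auto
    define z :: rat where "z = 1 - 1 / (of_int m / of_int q)"
    have zq: "z = of_int (m - q) / of_int m" using mm less.prems by (simp add: z_def field_simps)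
    have "Some z \<in> RB"
    proof (cases "m > 0")
      case True
      then show ?thesis using less.hyps[of m "m - q"] m zq by simp
    next
      case False
      then have "m < 0" using mm by simp
      have "z = of_int (q - m) / of_int (- m)" using zq mm by (simp add: field_simps)
      then show ?thesis using less.hyps[of "- m" "q - m"] m mm \<open>m < 0\<close> by simp
    qed
    moreover have "z \<noteq> 0" using mm less.prems by (simp add: zq)
    moreover have "1 - 1 / z = of_int q / of_int (q - m)" using mm less.prems by (simp add: zq field_simps)
    moreover have "of_int q / of_int (q - m) \<noteq> (0::rat)" using mm less.prems by simp
    moreover have "1 - 1 / (of_int q / of_int (q - m)) = (of_int m / of_int q :: rat)"
      using mm less.prems by (simp add: field_simps)
    ultimately show ?thesis using RBL[OF RBL[of "Some z"]] by (simp add: moebL_def)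
  qed
  then show ?case unfolding e by (rule RB_shift)
qed

lemma RB_UNIV: "x \<in> RB"
proof (cases x)
  case None then show ?thesis by (simp add: RB0)
next
  case (Some q)
  obtain p d where "q = of_int p / of_int d" "d > 0" by (rule rat_rep)
  then show ?thesis using Some RB_frac by simp
qed

lemma uniqB: assumes "sysB f" "sysB g" "f None = g None" shows "f = g"
proof
  fix x
  have "x \<in> RB" by (rule RB_UNIV)
  then show "f x = g x"
    by (induction x rule: RB.induct) (use assms in \<open>simp_all add: sysB_def\<close>)
qed


lemma wA: assumes "sysA f" shows "\<exists>w. f None = Some w \<and> w^2 = w + 1"
proof -
  have 1: "f (Some 0) = moebNeg (f None)" using assms[unfolded sysA_def, rule_format, of None]
    by (simp add: moebS_def)
  have 2: "f None = moebL (f (Some 0))" using assms[unfolded sysA_def, rule_format, of "Some 0"]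
    by (simp add: moebL_def)
  have e: "f None = moebL (moebNeg (f None))" using 1 2 by simp
  show ?thesis
  proof (cases "f None")
    case None then show ?thesis using e by (simp add: moebL_def moebNeg_def)
  next
    case (Some w)
    show ?thesis
    proof (cases "w = 0")
      case True then show ?thesis using e Some by (simp add: moebL_def moebNeg_def)
    next
      case False
      then have "w = 1 + 1 / w" using e Some by (simp add: moebL_def moebNeg_def)
      then have "w * w = w + 1" using False by (simp add: field_simps)
      then show ?thesis using Some by (simp add: power2_eq_square)
    qed
  qed
qed

lemma wB: assumes "sysB f" shows "\<exists>w. f None = Some w \<and> w^2 = w + 1"
proof -
  have 1: "f (Some 0) = moebM (f None)" using assms[unfolded sysB_def, rule_format, of None]
    by (simp add: moebT_def)
  have 2: "f (Some 1) = moebL (f None)" using assms[unfolded sysB_def, rule_format, of None]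
    by (simp add: moebL_def)
  have 3: "f (Some 0) = moebL (f (Some 1))" using assms[unfolded sysB_def, rule_format, of "Some 1"]
    by (simp add: moebL_def)
  have e: "moebM (f None) = moebL (moebL (f None))" using 1 2 3 by simp
  show ?thesis
  proof (cases "f None")
    case None then show ?thesis using e by (simp add: moebL_def moebM_def)
  next
    case (Some w)
    show ?thesis
    proof (cases "w = 0 \<or> w = 1")
      case True then show ?thesis using e Some by (auto simp: moebL_def moebM_def)
    next
      case False
      then have w0: "w \<noteq> 0" "w - 1 \<noteq> 0" by auto
      then have a: "1 - 1 / w \<noteq> 0" by (simp add: field_simps)
      have b: "1 - 1 / (1 - 1 / w) = - 1 / (w - 1)" using w0 by (simp add: field_simps)
      have "- 1 - 1 / w = - 1 / (w - 1)" using e Some w0 a b by (simp add: moebL_def moebM_def)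
      then have "(- w - 1) * (w - 1) = - w" using w0 by (simp add: field_simps)
      then have "w * w = w + 1" by (simp add: algebra_simps)
      then show ?thesis using Some by (simp add: power2_eq_square)
    qed
  qed
qed

lemma phi_sum: "phi + phibar = 1"
proof -
  have "(1 + sqrt 5) / 2 + (1 - sqrt 5) / 2 = (1 :: real)" by (simp add: field_simps)
  then show ?thesis unfolding phi_def phibar_def by (metis of_real_add of_real_1)
qed

lemma phi_prod: "phi * phibar = -1"
proof -
  have "(1 + sqrt 5) / 2 * ((1 - sqrt 5) / 2) = (-1 :: real)"
    by (simp add: field_simps power2_eq_square[symmetric])
  then show ?thesis unfolding phi_def phibar_def by (metis of_real_mult of_real_minus of_real_1)
qed

lemma phi_sq: "phi^2 = phi + 1"
proof -
  have p: "phi = 1 - phibar" using phi_sum by (metis add_diff_cancel_right')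
  have "phi^2 = phi * (1 - phibar)" by (subst p[symmetric]) (simp add: power2_eq_square)
  also have "\<dots> = phi + 1" using phi_prod by (simp add: algebra_simps)
  finally show ?thesis .
qed

lemma phibar_sq: "phibar^2 = phibar + 1"
proof -
  have p: "phibar = 1 - phi" using phi_sum by (metis add_diff_cancel_left')
  have "phibar^2 = phibar * (1 - phi)" by (subst p[symmetric]) (simp add: power2_eq_square)
  also have "\<dots> = phibar + 1" using phi_prod by (simp add: algebra_simps)
  finally show ?thesis .
qed

lemma golden_cases: assumes "w^2 = w + (1::complex)" shows "w = phi \<or> w = phibar"
proof -
  have "(w - phi) * (w - phibar) = w^2 - (phi + phibar) * w + phi * phibar"
    by (simp add: algebra_simps power2_eq_square)
  also have "\<dots> = 0" using assms phi_sum phi_prod by simp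
  finally show ?thesis by simp
qed

lemma phi_nz: "phi \<noteq> 0" "phibar \<noteq> 0" using phi_prod by auto

lemma inv_phibar: "1 - 1 / phibar = phi^2"
proof -
  have "1 / phibar = - phi" using phi_prod phi_nz by (simp add: field_simps)
  then show ?thesis using phi_sq by simp
qed

lemma inv_phi: "1 - 1 / phi = phibar^2"
proof -
  have "1 / phi = - phibar" using phi_prod phi_nz by (simp add: field_simps)
  then show ?thesis using phibar_sq by simp
qed

lemma phi_neq: "phi^2 \<noteq> phibar^2"
proof
  assume "phi^2 = phibar^2"
  then have "phi + 1 = phibar + 1" using phi_sq phibar_sq by simp
  then have "phi = phibar" by simp
  then have "(1 + sqrt 5) / 2 = (1 - sqrt 5) / (2::real)" unfolding phi_def phibar_def using of_real_eq_iff by blast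
  then have "sqrt 5 = (0::real)" by simp
  then show False by simp
qed

lemma f1_val: assumes "f None = Some w" "w^2 = w + 1" "f (Some 1) = moebL (f None)"
  shows "f (Some 1) = Some (phi^2) \<or> f (Some 1) = Some (phibar^2)"
proof -
  have "w \<noteq> 0" using assms(2) by auto
  then have "f (Some 1) = Some (1 - 1 / w)" using assms by (simp add: moebL_def)
  then show ?thesis using golden_cases[OF assms(2)] inv_phi inv_phibar by auto
qed

lemma uniq1A: assumes "sysA f" "sysA g" "f (Some 1) = g (Some 1)" shows "f = g"
proof -
  have "moebL (None :: rat option) = Some 1" by (simp add: moebL_def)
  then have "moebL (f None) = moebL (g None)"
    using assms(1,2)[unfolded sysA_def, rule_format, of None] assms(3) by simp
  then show ?thesis using uniqA assms moebL_inj by blast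
qed

lemma uniq1B: assumes "sysB f" "sysB g" "f (Some 1) = g (Some 1)" shows "f = g"
proof -
  have "moebL (None :: rat option) = Some 1" by (simp add: moebL_def)
  then have "moebL (f None) = moebL (g None)"
    using assms(1,2)[unfolded sysB_def, rule_format, of None] assms(3) by simp
  then show ?thesis using uniqB assms moebL_inj by blast
qed

lemma fA_phibar: "sysA (fA phibar)" "fA phibar (Some 1) = Some (phi^2)"
  using sysA_fA[OF phibar_sq] fA_1[OF phibar_sq] inv_phibar by auto
lemma fA_phi: "sysA (fA phi)" "fA phi (Some 1) = Some (phibar^2)"
  using sysA_fA[OF phi_sq] fA_1[OF phi_sq] inv_phi by auto

theorem mainTheorem10:
  shows "(\<exists>!f. sysA f \<and> f (Some 1) = Some (phi ^ 2))
       \<and> (\<exists>!f. sysA f \<and> f (Some 1) = Some (phibar ^ 2))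
       \<and> (\<forall>f. sysA f \<longrightarrow> f (Some 1) = Some (phi ^ 2) \<or> f (Some 1) = Some (phibar ^ 2))
       \<and> (\<exists>!f. sysB f \<and> f (Some 1) = Some (phi ^ 2))
       \<and> (\<exists>!f. sysB f \<and> f (Some 1) = Some (phibar ^ 2))
       \<and> (\<forall>f. sysB f \<longrightarrow> f (Some 1) = Some (phi ^ 2) \<or> f (Some 1) = Some (phibar ^ 2))"
proof (intro conjI allI impI)
  show "\<exists>!f. sysA f \<and> f (Some 1) = Some (phi ^ 2)"
  proof (rule ex1I[of _ "fA phibar"])
    show "sysA (fA phibar) \<and> fA phibar (Some 1) = Some (phi ^ 2)" using fA_phibar(1) fA_phibar(2) by simp
    fix g assume "sysA g \<and> g (Some 1) = Some (phi ^ 2)"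
    then show "g = fA phibar" using uniq1A[of g "fA phibar"] fA_phibar(1) fA_phibar(2) by simp
  qed
  show "\<exists>!f. sysA f \<and> f (Some 1) = Some (phibar ^ 2)"
  proof (rule ex1I[of _ "fA phi"])
    show "sysA (fA phi) \<and> fA phi (Some 1) = Some (phibar ^ 2)" using fA_phi(1) fA_phi(2) by simp
    fix g assume "sysA g \<and> g (Some 1) = Some (phibar ^ 2)"
    then show "g = fA phi" using uniq1A[of g "fA phi"] fA_phi(1) fA_phi(2) by simp
  qed
  show "\<exists>!f. sysB f \<and> f (Some 1) = Some (phi ^ 2)"
  proof (rule ex1I[of _ "fA phibar"])
    show "sysB (fA phibar) \<and> fA phibar (Some 1) = Some (phi ^ 2)" using sysA_sysB[OF fA_phibar(1)] fA_phibar(2) by simp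
    fix g assume "sysB g \<and> g (Some 1) = Some (phi ^ 2)"
    then show "g = fA phibar" using uniq1B[of g "fA phibar"] sysA_sysB[OF fA_phibar(1)] fA_phibar(2) by simp
  qed
  show "\<exists>!f. sysB f \<and> f (Some 1) = Some (phibar ^ 2)"
  proof (rule ex1I[of _ "fA phi"])
    show "sysB (fA phi) \<and> fA phi (Some 1) = Some (phibar ^ 2)" using sysA_sysB[OF fA_phi(1)] fA_phi(2) by simp
    fix g assume "sysB g \<and> g (Some 1) = Some (phibar ^ 2)"
    then show "g = fA phi" using uniq1B[of g "fA phi"] sysA_sysB[OF fA_phi(1)] fA_phi(2) by simp
  qed
next
  fix f assume h: "sysA f"
  obtain w where "f None = Some w" "w^2 = w + 1" using wA[OF h] by blast
  moreover have "f (Some 1) = moebL (f None)" using h[unfolded sysA_def, rule_format, of None] by (simp add: moebL_def)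
  ultimately show "f (Some 1) = Some (phi ^ 2) \<or> f (Some 1) = Some (phibar ^ 2)" by (rule f1_val)
next
  fix f assume h: "sysB f"
  obtain w where "f None = Some w" "w^2 = w + 1" using wB[OF h] by blast
  moreover have "f (Some 1) = moebL (f None)" using h[unfolded sysB_def, rule_format, of None] by (simp add: moebL_def)
  ultimately show "f (Some 1) = Some (phi ^ 2) \<or> f (Some 1) = Some (phibar ^ 2)" by (rule f1_val)
qed

end
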